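(* Let $k\ge1$ and $n\neq0$ be integers and $\mathcal K=J(k,2n)$, whose knot group is $G(\mathcal K)=\langle a,b\mid w^na=bw^n\rangle$ with $w=(ba^{-1})^m(b^{-1}a)^m$ if $k=2m$ and $w=(ba^{-1})^mba(b^{-1}a)^m$ if $k=2m+1$. For a representation $\rho:G(\mathcal K)\to\mathrm{SL}_2(\mathbb C)$ of the form $\rho(a)=\begin{bmatrix} M&1\\0&M^{-1}\end{bmatrix}$, $\rho(b)=\begin{bmatrix} M&0\\2-y&M^{-1}\end{bmatrix}$ (so $y=\operatorname{tr}\rho(ab^{-1})$), put $z=\operatorname{tr}\rho(w)$. Then: (1) If $k=2m$, then $S_{m-1}(y)S_{n-1}(z)\neq0$ for every non-abelian representation $\rho$ of this form. (2) If $k=2m+1\ge3$ (in which case $\mathcal K$ is hyperbolic) and $\rho=\rho_0$ is the holonomy representation of $\mathcal K$, conjugated into this form, then $S_m(y)S_{m-1}(y)\neq0$.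
   Context: $J(k,l)$ denotes the double twist knot/link, the rational knot/link corresponding to the continued fraction $-k+\frac1l$. Every non-abelian representation $G(\mathcal K)\to\mathrm{SL}_2(\mathbb C)$ is conjugate to one of the displayed form with $(M,y)\in(\mathbb C\setminus\{0\})\times\mathbb C$. $S_l(v)$, $l\in\mathbb Z$, are the Chebyshev polynomials of the second kind: $S_0=1$, $S_1=v$, $S_l=vS_{l-1}-S_{l-2}$ for all integers $l$. For a hyperbolic knot, the holonomy representation $\rho_0$ is a lift to $\mathrm{SL}_2(\mathbb C)$ of the discrete faithful representation into $\mathrm{PSL}_2(\mathbb C)$ coming from the complete hyperbolic structure of the knot exterior; it is non-abelian with $\operatorname{tr}\rho_0(a)=\pm2$. *)

theory Defs
  imports "HOL-Analysis.Analysis"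
begin

type_synonym cmat = "complex^2^2"

definition mat2 :: "complex \<Rightarrow> complex \<Rightarrow> complex \<Rightarrow> complex \<Rightarrow> cmat" where
  "mat2 p q r s = vector [vector [p, q], vector [r, s]]"

fun chebS_nat :: "nat \<Rightarrow> complex \<Rightarrow> complex" where
  "chebS_nat 0 v = 1"
| "chebS_nat (Suc 0) v = v"
| "chebS_nat (Suc (Suc j)) v = v * chebS_nat (Suc j) v - chebS_nat j v"

text \<open>S_l for l in Z: S_0 = 1, S_1 = v, S_l = v S_(l-1) - S_(l-2) for all l;
  hence S_(-1) = 0 and S_(-l) = - S_(l-2).\<close>
definition chebS :: "int \<Rightarrow> complex \<Rightarrow> complex" where
  "chebS l v = (if l \<ge> 0 then chebS_nat (nat l) v
                else if l = -1 then 0 else - chebS_nat (nat (- l - 2)) v)"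

text \<open>A letter is (g, e): g = False means a, g = True means b; e = True means inverse.\<close>
type_synonym letter = "bool \<times> bool"
type_synonym word = "letter list"

abbreviation la :: letter where "la \<equiv> (False, False)"
abbreviation lA :: letter where "lA \<equiv> (False, True)"
abbreviation lb :: letter where "lb \<equiv> (True, False)"
abbreviation lB :: letter where "lB \<equiv> (True, True)"

definition inv_letter :: "letter \<Rightarrow> letter" where
  "inv_letter x = (fst x, \<not> snd x)"

definition inv_word :: "word \<Rightarrow> word" where
  "inv_word u = rev (map inv_letter u)"

definition wpow :: "word \<Rightarrow> int \<Rightarrow> word" where
  "wpow u e = (if e \<ge> 0 then concat (replicate (nat e) u)
               else concat (replicate (nat (- e)) (inv_word u)))"

definition wword :: "nat \<Rightarrow> word" where
  "wword k = (let m = k div 2 in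
     if even k then concat (replicate m [lb, lA]) @ concat (replicate m [lB, la])
     else concat (replicate m [lb, lA]) @ [lb, la] @ concat (replicate m [lB, la]))"

definition relator :: "nat \<Rightarrow> int \<Rightarrow> word" where
  "relator k n = wpow (wword k) n @ [la] @ wpow (wword k) (- n) @ [lB]"

text \<open>Equality of words in the finitely presented group G(J(k,2n)):
  the congruence on words generated by free cancellation and the relator.\<close>
inductive geq :: "nat \<Rightarrow> int \<Rightarrow> word \<Rightarrow> word \<Rightarrow> bool" for k n where
  geq_refl: "geq k n u u"
| geq_sym: "geq k n u v \<Longrightarrow> geq k n v u"
| geq_trans: "geq k n u v \<Longrightarrow> geq k n v t \<Longrightarrow> geq k n u t"
| geq_app: "geq k n u u' \<Longrightarrow> geq k n v v' \<Longrightarrow> geq k n (u @ v) (u' @ v')"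
| geq_cancel: "geq k n [x, inv_letter x] []"
| geq_rel: "geq k n (relator k n) []"

definition eval_letter :: "cmat \<Rightarrow> cmat \<Rightarrow> letter \<Rightarrow> cmat" where
  "eval_letter A B x = (let X = (if fst x then B else A) in if snd x then matrix_inv X else X)"

definition weval :: "cmat \<Rightarrow> cmat \<Rightarrow> word \<Rightarrow> cmat" where
  "weval A B u = foldr (\<lambda>x P. eval_letter A B x ** P) u (mat 1)"

definition is_rep :: "nat \<Rightarrow> int \<Rightarrow> cmat \<Rightarrow> cmat \<Rightarrow> bool" where
  "is_rep k n A B \<longleftrightarrow> weval A B (wpow (wword k) n @ [la]) = weval A B ([lb] @ wpow (wword k) n)"

text \<open>The induced map G(J(k,2n)) \<rightarrow> PSL_2(C) is injective.\<close>
definition proj_faithful :: "nat \<Rightarrow> int \<Rightarrow> cmat \<Rightarrow> cmat \<Rightarrow> bool" where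
  "proj_faithful k n A B \<longleftrightarrow>
     (\<forall>u. (weval A B u = mat 1 \<or> weval A B u = - mat 1) \<longrightarrow> geq k n u [])"

text \<open>The image in PSL_2(C) is discrete (the identity is isolated).\<close>
definition proj_discrete :: "cmat \<Rightarrow> cmat \<Rightarrow> bool" where
  "proj_discrete A B \<longleftrightarrow> (\<exists>\<epsilon>>0. \<forall>u.
     (norm (weval A B u - mat 1) < \<epsilon> \<or> norm (weval A B u + mat 1) < \<epsilon>)
       \<longrightarrow> (weval A B u = mat 1 \<or> weval A B u = - mat 1))"

end

theory Submission
  imports Defs "HOL-Computational_Algebra.Fundamental_Theorem_Algebra"
begin


lemma mat2_nth: "mat2 a b c d $ 1 $ 1 = a" "mat2 a b c d $ 1 $ 2 = b"
  "mat2 a b c d $ 2 $ 1 = c" "mat2 a b c d $ 2 $ 2 = d"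
  by (simp_all add: mat2_def)

lemma mat2_eta: "X = mat2 (X$1$1) (X$1$2) (X$2$1) (X$2$2)"
  by (simp add: vec_eq_iff forall_2 mat2_nth)

lemma mat2_eq_iff: "mat2 a b c d = mat2 a' b' c' d' \<longleftrightarrow> a = a' \<and> b = b' \<and> c = c' \<and> d = d'"
  by (metis mat2_nth)

lemma mat2_mult: "mat2 a b c d ** mat2 e f g h = mat2 (a*e+b*g) (a*f+b*h) (c*e+d*g) (c*f+d*h)"
  by (simp add: vec_eq_iff forall_2 mat2_nth matrix_matrix_mult_def sum_2)

lemma mat_mat2: "mat x = mat2 x 0 0 x"
  by (simp add: vec_eq_iff forall_2 mat2_nth mat_def)

lemma neg_mat2: "- mat2 a b c d = mat2 (-a) (-b) (-c) (-d)"
  by (simp add: vec_eq_iff forall_2 mat2_nth)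

lemma det_mat2: "det (mat2 a b c d) = a*d - b*c"
  by (simp add: det_2 mat2_nth)

lemma trace_mat2: "trace (mat2 a b c d) = a + d"
  by (simp add: trace_def sum_2 mat2_nth)

lemma inv_unique:
  fixes A :: cmat
  assumes "A ** X = mat 1" "X ** A = mat 1" "A ** Y = mat 1" "Y ** A = mat 1"
  shows "X = Y"
  by (metis assms matrix_mul_assoc matrix_mul_lid matrix_mul_rid)

lemma matrix_inv_mat2:
  assumes "a*d - b*c \<noteq> 0"
  shows "matrix_inv (mat2 a b c d) = mat2 (d/(a*d-b*c)) (-b/(a*d-b*c)) (-c/(a*d-b*c)) (a/(a*d-b*c))"
proof -
  let ?A = "mat2 a b c d" and ?X = "mat2 (d/(a*d-b*c)) (-b/(a*d-b*c)) (-c/(a*d-b*c)) (a/(a*d-b*c))"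
  define D where "D = a*d - b*c"
  have D: "D \<noteq> 0" using assms D_def by simp
  have e1: "a*(d/D) + b*(-c/D) = 1" "c*(d/D) + d*(-c/D) = 0" "a*(-b/D) + b*(a/D) = 0" "c*(-b/D)+d*(a/D) = 1"
    "d/D*a + -b/D*c = 1" "d/D*b + -b/D*d = 0" "-c/D*a + a/D*c = 0" "-c/D*b+a/D*d = 1"
  proof -
    have "a*(d/D) + b*(-c/D) = (a*d-b*c)/D" "c*(d/D) + d*(-c/D) = 0" "a*(-b/D) + b*(a/D) = 0" "c*(-b/D)+d*(a/D) = (a*d-b*c)/D"
    "d/D*a + -b/D*c = (a*d-b*c)/D" "d/D*b + -b/D*d = 0" "-c/D*a + a/D*c = 0" "-c/D*b+a/D*d = (a*d-b*c)/D"
      by (simp_all add: diff_divide_distrib add_divide_distrib algebra_simps)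
    then show "a*(d/D) + b*(-c/D) = 1" "c*(d/D) + d*(-c/D) = 0" "a*(-b/D) + b*(a/D) = 0" "c*(-b/D)+d*(a/D) = 1"
    "d/D*a + -b/D*c = 1" "d/D*b + -b/D*d = 0" "-c/D*a + a/D*c = 0" "-c/D*b+a/D*d = 1"
      using D unfolding D_def[symmetric] by simp_all
  qed
  have h: "?A ** ?X = mat 1 \<and> ?X ** ?A = mat 1"
    unfolding D_def[symmetric] using e1 by (simp add: mat2_mult mat_mat2 mat2_eq_iff)
  then have "?A ** matrix_inv ?A = mat 1 \<and> matrix_inv ?A ** ?A = mat 1"
    unfolding matrix_inv_def by (rule someI)
  with h show ?thesis using inv_unique by blast
qed

lemma inv_mat2_det1:
  assumes "a*d - b*c = 1"
  shows "matrix_inv (mat2 a b c d) = mat2 d (-b) (-c) a"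
  using matrix_inv_mat2[of a d b c] assms by simp


fun mpow :: "cmat \<Rightarrow> nat \<Rightarrow> cmat" where
  "mpow X 0 = mat 1"
| "mpow X (Suc j) = X ** mpow X j"

lemma weval_Nil[simp]: "weval A B [] = mat 1"
  by (simp add: weval_def)

lemma weval_Cons[simp]: "weval A B (x # u) = eval_letter A B x ** weval A B u"
  by (simp add: weval_def)

lemma weval_append: "weval A B (u @ v) = weval A B u ** weval A B v"
  by (induction u) (simp_all add: matrix_mul_assoc)

lemma weval_concat_rep: "weval A B (concat (replicate j u)) = mpow (weval A B u) j"
  by (induction j) (simp_all add: weval_append)

lemma inv_letter_inv[simp]: "inv_letter (inv_letter x) = x"
  by (simp add: inv_letter_def)

lemma inv_word_append: "inv_word (u @ v) = inv_word v @ inv_word u"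
  by (simp add: inv_word_def)

lemma inv_word_inv[simp]: "inv_word (inv_word u) = u"
  by (simp add: inv_word_def rev_map comp_def)

lemma concat_rep_snoc: "concat (replicate j v) @ v = v @ concat (replicate j v)"
  by (induction j) simp_all

lemma inv_word_concat_rep: "inv_word (concat (replicate j u)) = concat (replicate j (inv_word u))"
proof (induction j)
  case 0 then show ?case by (simp add: inv_word_def)
next
  case (Suc j) then show ?case by (simp add: inv_word_append concat_rep_snoc)
qed

lemma wpow_neg: "wpow u (-e) = inv_word (wpow u e)"
proof -
  have "[] = inv_word []" by (simp add: inv_word_def)
  then show ?thesis
    using inv_word_concat_rep[of _ u] inv_word_concat_rep[of _ "inv_word u"]
    by (auto simp add: wpow_def simp del: inv_word_inv) (simp)
qed

lemma eval_letter_inv: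
  assumes "invertible A" "invertible B"
  shows "eval_letter A B x ** eval_letter A B (inv_letter x) = mat 1"
    "eval_letter A B (inv_letter x) ** eval_letter A B x = mat 1"
proof -
  have i: "invertible X \<Longrightarrow> X ** matrix_inv X = mat 1 \<and> matrix_inv X ** X = mat 1" for X :: cmat
    unfolding invertible_def matrix_inv_def by (rule someI_ex)
  obtain g e where x: "x = (g, e)" by force
  show "eval_letter A B x ** eval_letter A B (inv_letter x) = mat 1"
    "eval_letter A B (inv_letter x) ** eval_letter A B x = mat 1"
    using i[OF assms(1)] i[OF assms(2)]
    by (cases g; cases e; simp add: x eval_letter_def inv_letter_def)+
qed

lemma weval_inv_word:
  assumes "invertible A" "invertible B"
  shows "weval A B u ** weval A B (inv_word u) = mat 1 \<and> weval A B (inv_word u) ** weval A B u = mat 1"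
proof (induction u)
  case Nil then show ?case by (simp add: inv_word_def)
next
  case (Cons x u)
  have iw: "inv_word (x # u) = inv_word u @ [inv_letter x]"
    by (simp add: inv_word_def)
  let ?e = "eval_letter A B x" and ?f = "eval_letter A B (inv_letter x)"
    and ?W = "weval A B u" and ?V = "weval A B (inv_word u)"
  have "?e ** ?W ** (?V ** ?f) = ?e ** (?W ** ?V) ** ?f" by (simp add: matrix_mul_assoc)
  also have "\<dots> = mat 1" using Cons eval_letter_inv[OF assms] by simp
  finally have 1: "?e ** ?W ** (?V ** ?f) = mat 1" .
  have "?V ** ?f ** (?e ** ?W) = ?V ** (?f ** ?e) ** ?W" by (simp add: matrix_mul_assoc)
  also have "\<dots> = mat 1" using Cons eval_letter_inv[OF assms] by simp
  finally have 2: "?V ** ?f ** (?e ** ?W) = mat 1" .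
  show ?case using 1 2 by (simp add: iw weval_append)
qed

lemma geq_weval:
  assumes "invertible A" "invertible B" "is_rep k n A B" "geq k n u v"
  shows "weval A B u = weval A B v"
  using assms(4)
proof (induction rule: geq.induct)
  case (geq_app u u' v v') then show ?case by (simp add: weval_append)
next
  case (geq_cancel x) then show ?case using eval_letter_inv[OF assms(1,2)] by simp
next
  case geq_rel
  let ?P = "weval A B (wpow (wword k) n)" and ?Q = "weval A B (wpow (wword k) (-n))"
  have PQ: "?P ** ?Q = mat 1" using weval_inv_word[OF assms(1,2)] by (simp add: wpow_neg)
  have rel: "?P ** A = B ** ?P" using assms(3)
    by (simp add: is_rep_def weval_append eval_letter_def)
  have Bi: "B ** matrix_inv B = mat 1"
    using eval_letter_inv(1)[OF assms(1,2), of lb] by (simp add: eval_letter_def inv_letter_def)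
  have "weval A B (relator k n) = ?P ** A ** ?Q ** matrix_inv B"
    by (simp add: relator_def weval_append eval_letter_def matrix_mul_assoc)
  also have "\<dots> = B ** (?P ** ?Q) ** matrix_inv B" using rel by (simp add: matrix_mul_assoc)
  also have "\<dots> = mat 1" using PQ Bi by simp
  finally show ?case by simp
qed auto


lemma chebS_rec: "chebS_nat (Suc j) t = t * chebS_nat j t - chebS (int j - 1) t"
  by (cases j) (simp_all add: chebS_def)

lemma chebS_Suc_int: "chebS (int (Suc j) - 1) t = chebS_nat j t"
  by (simp add: chebS_def)

lemma ch_mat2:
  assumes "a*d - b*c = 1"
  shows "mpow (mat2 a b c d) (Suc j) =
    mat2 (chebS_nat j (a+d) * a - chebS (int j - 1) (a+d)) (chebS_nat j (a+d) * b)
         (chebS_nat j (a+d) * c) (chebS_nat j (a+d) * d - chebS (int j - 1) (a+d))"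
proof (induction j)
  case 0 then show ?case by (simp add: chebS_def mat_mat2 mat2_mult)
next
  case (Suc j)
  have bc: "b*c = a*d - 1" using assms by (simp add: algebra_simps)
  define S where "S = chebS_nat j (a+d)"
  define T where "T = chebS (int j - 1) (a+d)"
  have e: "chebS_nat (Suc j) (a+d) = (a+d)*S - T" "chebS (int (Suc j) - 1) (a+d) = S"
    by (simp_all add: S_def T_def chebS_rec chebS_Suc_int del: of_nat_Suc)
  have st: "mpow (mat2 a b c d) (Suc (Suc j)) = mat2 a b c d ** mat2 (S * a - T) (S * b) (S * c) (S * d - T)"
    using Suc by (simp add: S_def T_def)
  show ?case unfolding st e mat2_mult mat2_eq_iff
    using assms by algebra
qed


lemma det_mpow: "det X = 1 \<Longrightarrow> det (mpow X j) = 1"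
  by (induction j) (simp_all add: det_mul det_I)

lemma ch_zero:
  assumes "det X = 1" "chebS_nat j (trace X) = 0"
  shows "mpow X (Suc j) = mat (- chebS (int j - 1) (trace X)) \<and> (chebS (int j - 1) (trace X))^2 = 1"
proof -
  obtain a b c d where X: "X = mat2 a b c d" using mat2_eta by blast
  have d1: "a*d - b*c = 1" using assms(1) X by (simp add: det_mat2)
  have tr: "trace X = a + d" using X by (simp add: trace_mat2)
  have m: "mpow X (Suc j) = mat (- chebS (int j - 1) (trace X))"
  proof -
    have S0: "chebS_nat j (a+d) = 0" using assms(2) tr by simp
    show ?thesis using ch_mat2[OF d1, of j] unfolding tr X S0 by (simp add: mat_mat2 trace_mat2)
  qed
  have "det (mpow X (Suc j)) = 1" using det_mpow assms(1) by blast
  then have "(chebS (int j - 1) (trace X))^2 = 1" unfolding m by (simp add: mat_mat2 det_mat2 power2_eq_square)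
  with m show ?thesis by simp
qed

lemma mat_pm: "s^2 = (1::complex) \<Longrightarrow> mat (- s) = mat 1 \<or> mat (-s) = - (mat 1 :: cmat)"
  by (auto simp: power2_eq_1_iff mat_mat2 neg_mat2)

definition adj2 :: "cmat \<Rightarrow> cmat" where
  "adj2 X = mat2 (X$2$2) (-(X$1$2)) (-(X$2$1)) (X$1$1)"

lemma adj2_inv: "det X = 1 \<Longrightarrow> X ** adj2 X = mat 1 \<and> adj2 X ** X = mat 1"
proof -
  assume "det X = 1"
  moreover obtain a b c d where X: "X = mat2 a b c d" using mat2_eta by blast
  ultimately have "a*d-b*c = 1" by (simp add: det_mat2)
  then show ?thesis unfolding X
    by (simp add: adj2_def mat2_nth mat2_mult mat_mat2 mat2_eq_iff algebra_simps)
qed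

lemma adj2_trace_det: "trace (adj2 X) = trace X" "det (adj2 X) = det X"
  by (simp_all add: adj2_def mat2_nth trace_mat2 det_mat2 trace_def sum_2 det_2 algebra_simps)

lemma det_matrix_inv1:
  assumes "det (A::cmat) = 1" shows "det (matrix_inv A) = 1" "invertible A"
proof -
  show inv: "invertible A" using assms invertible_det_nz by force
  have "A ** matrix_inv A = mat 1"
    using inv unfolding invertible_def matrix_inv_def by (rule someI_ex[THEN conjunct1])
  then have "det A * det (matrix_inv A) = 1" by (metis det_I det_mul)
  then show "det (matrix_inv A) = 1" using assms by simp
qed

lemma det_weval:
  assumes "det A = 1" "det B = 1"
  shows "det (weval A B u) = 1"
proof (induction u)
  case Nil then show ?case by (simp add: det_I)
next
  case (Cons x u)
  have "det (eval_letter A B x) = 1"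
    using assms det_matrix_inv1 by (simp add: eval_letter_def Let_def)
  then show ?case using Cons by (simp add: det_mul)
qed

lemma weval_inv_word_adj:
  assumes "det A = 1" "det B = 1"
  shows "weval A B (inv_word u) = adj2 (weval A B u)"
  using weval_inv_word[OF det_matrix_inv1(2)[OF assms(1)] det_matrix_inv1(2)[OF assms(2)], of u]
    adj2_inv[OF det_weval[OF assms, of u]] inv_unique by blast


lemma mat_mult_mat: "mat a ** mat b = (mat (a*b) :: cmat)"
  by (simp add: mat_mat2 mat2_mult)

lemma mpow_mat1: "mpow (mat 1) j = mat 1"
  by (induction j) simp_all

lemma weval_wpow:
  assumes "det A = 1" "det B = 1"
  shows "weval A B (wpow u e) = (if e \<ge> 0 then mpow (weval A B u) (nat e) else mpow (adj2 (weval A B u)) (nat (-e)))"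
  by (simp add: wpow_def weval_concat_rep weval_inv_word_adj[OF assms])

lemma scal_cancel:
  assumes "mat c ** X = mat c ** Y" "c \<noteq> 0"
  shows "X = (Y::cmat)"
proof -
  have "mat (1/c) ** (mat c ** X) = mat (1/c) ** (mat c ** Y)" using assms by simp
  then show ?thesis using assms(2) by (simp add: matrix_mul_assoc mat_mult_mat)
qed

lemma AB_facts:
  fixes y :: complex
  assumes "M \<noteq> 0" "A = mat2 M 1 0 (inverse M)" "B = mat2 M 0 (2 - y) (inverse M)"
  shows "det A = 1" "det B = 1" "trace (A ** matrix_inv B) = y" "trace (B ** matrix_inv A) = y"
    "trace (matrix_inv B ** A) = y"
proof -
  note A_def = assms(2) and B_def = assms(3)
  show dA: "det A = 1" "det B = 1" using assms by (simp_all add: det_mat2)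
  have iA: "matrix_inv A = mat2 (inverse M) (-1) 0 M" unfolding A_def
    using inv_mat2_det1[of M "inverse M" 1 0] assms by simp
  have iB: "matrix_inv B = mat2 (inverse M) 0 (-(2-y)) M" unfolding B_def
    using inv_mat2_det1[of M "inverse M" 0 "2-y"] assms by simp
  show "trace (A ** matrix_inv B) = y" "trace (B ** matrix_inv A) = y"
    "trace (matrix_inv B ** A) = y"
    using assms unfolding iA iB by (simp_all add: assms mat2_mult trace_mat2 algebra_simps)
qed


lemma mat_comm:
  fixes X :: cmat and c :: complex
  shows "mat c ** X = X ** mat c"
proof -
  obtain a1 a2 a3 a4 where X: "X = mat2 a1 a2 a3 a4" using mat2_eta by blast
  show ?thesis unfolding X by (simp add: mat_mat2 mat2_mult mult.commute)
qed



lemma pow_scalar_imp_eq: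
  assumes "is_rep k n A B" "weval A B (wpow (wword k) n) = mat c" "c \<noteq> 0"
  shows "A = B"
proof -
  have "weval A B (wpow (wword k) n) ** A = B ** weval A B (wpow (wword k) n)"
    using assms(1) by (simp add: is_rep_def weval_append eval_letter_def)
  then have "mat c ** A = mat c ** B" using assms(2) by (simp add: mat_comm)
  then show ?thesis using scal_cancel assms(3) by blast
qed

lemma part1:
  fixes y :: complex
  assumes "M \<noteq> 0" "k = 2*m" "k \<ge> 1" "n \<noteq> 0"
    "is_rep k n (mat2 M 1 0 (inverse M)) (mat2 M 0 (2 - y) (inverse M))"
    "mat2 M 1 0 (inverse M) ** mat2 M 0 (2 - y) (inverse M)
         \<noteq> mat2 M 0 (2 - y) (inverse M) ** mat2 M 1 0 (inverse M)"
  shows "chebS (int m - 1) y *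
       chebS (n - 1) (trace (weval (mat2 M 1 0 (inverse M)) (mat2 M 0 (2 - y) (inverse M)) (wword k)))
         \<noteq> 0"
proof -
  define A where "A = mat2 M 1 0 (inverse M)"
  define B where "B = mat2 M 0 (2 - y) (inverse M)"
  note F = AB_facts[OF assms(1) A_def B_def]
  have nAB: "A \<noteq> B" using assms(6) unfolding A_def[symmetric] B_def[symmetric] by metis
  define W where "W = weval A B (wword k)"
  have dW: "det W = 1" unfolding W_def using det_weval F by blast
  obtain m' where m': "m = Suc m'" using assms(2,3) by (cases m) auto
  have ww: "wword k = concat (replicate m [lb, lA]) @ concat (replicate m [lB, la])"
    unfolding assms(2) wword_def Let_def by simp
  have Wm: "W = mpow (B ** matrix_inv A) m ** mpow (matrix_inv B ** A) m"
    unfolding W_def ww weval_append weval_concat_rep by (simp add: eval_letter_def)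
  have wp: "weval A B (wpow (wword k) n) = (if n \<ge> 0 then mpow W (nat n) else mpow (adj2 W) (nat (-n)))"
    unfolding W_def using weval_wpow F by blast
  have rep: "is_rep k n A B" using assms(5) unfolding A_def B_def .
  have c1: "chebS (int m - 1) y \<noteq> 0"
  proof
    assume h: "chebS (int m - 1) y = 0"
    have h': "chebS_nat m' y = 0" using h by (simp add: m' chebS_def)
    define s where "s = chebS (int m' - 1) y"
    have d1: "det (B ** matrix_inv A) = 1" "det (matrix_inv B ** A) = 1"
      using F det_matrix_inv1 by (simp_all add: det_mul)
    have p1: "mpow (B ** matrix_inv A) m = mat (- s)" "s^2 = 1"
      using ch_zero[OF d1(1), of m'] h' F by (simp_all add: m' s_def)
    have p2: "mpow (matrix_inv B ** A) m = mat (- s)"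
      using ch_zero[OF d1(2), of m'] h' F by (simp_all add: m' s_def)
    have "W = mat 1" using Wm p1 p2 by (simp add: mat_mult_mat power2_eq_square)
    moreover have "adj2 (mat 1) = mat 1" by (simp add: adj2_def mat_mat2 mat2_nth)
    ultimately have "weval A B (wpow (wword k) n) = mat 1" using wp by (simp add: mpow_mat1)
    then have "A = B" using pow_scalar_imp_eq[OF rep] by simp
    with nAB show False by simp
  qed
  have c2: "chebS (n - 1) (trace W) \<noteq> 0"
  proof
    assume h: "chebS (n - 1) (trace W) = 0"
    show False
    proof (cases "n > 0")
      case True
      define j where "j = nat n - 1"
      have j: "n = int (Suc j)" using True j_def by simp
      have h': "chebS_nat j (trace W) = 0" using h by (simp add: j chebS_def)
      have nj: "nat n = Suc j" using j by simp
      have "weval A B (wpow (wword k) n) = mat (- chebS (int j - 1) (trace W))"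
           "chebS (int j - 1) (trace W) ^2 = 1"
        using wp ch_zero[OF dW h'] nj True by simp_all
      then have "A = B" using pow_scalar_imp_eq[OF rep] by force
      with nAB show False by simp
    next
      case False
      define j where "j = nat (-n) - 1"
      have j: "n = - int (Suc j)" using False assms(4) j_def by simp
      have h': "chebS_nat j (trace (adj2 W)) = 0" using h
        by (simp add: j chebS_def adj2_trace_det)
      have dW': "det (adj2 W) = 1" using dW by (simp add: adj2_trace_det)
      have nj: "nat (-n) = Suc j" using j by simp
      have "weval A B (wpow (wword k) n) = mat (- chebS (int j - 1) (trace (adj2 W)))"
           "chebS (int j - 1) (trace (adj2 W)) ^2 = 1"
        using wp ch_zero[OF dW' h'] nj False assms(4) by simp_all
      then have "A = B" using pow_scalar_imp_eq[OF rep] by force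
      with nAB show False by simp
    qed
  qed
  show ?thesis using c1 c2 unfolding A_def[symmetric] B_def[symmetric] W_def[symmetric] by simp
qed



lemma mpow_aff: "mpow (mat2 s c 0 1) j = mat2 (s^j) (c * (\<Sum>i<j. s^i)) 0 1"
proof (induction j)
  case 0 then show ?case by (simp add: mat_mat2)
next
  case (Suc j)
  have "(\<Sum>i<Suc j. s^i) = 1 + s * (\<Sum>i<j. s^i)"
    unfolding sum.lessThan_Suc_shift by (simp add: sum_distrib_left)
  then show ?case using Suc by (simp add: mat2_mult algebra_simps)
qed

lemma zsum: "(\<Sum>i<Suc j. (0::complex)^(2*i)) = 1"
  by (induction j) simp_all

lemma aff_weval:
  fixes t :: complex
  assumes "t \<noteq> 0" "k = 2*m+1"
  shows "weval (mat2 t 0 0 1) (mat2 t 1 0 1) (wword k) = mat2 (t^2) (1 + of_nat m - of_nat m * t) 0 1"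
proof -
  have iA: "matrix_inv (mat2 t 0 0 1) = mat2 (1/t) 0 0 1"
    using matrix_inv_mat2[of t 1 0 0] assms(1) by simp
  have iB: "matrix_inv (mat2 t 1 0 1) = mat2 (1/t) (-(1/t)) 0 1"
    using matrix_inv_mat2[of t 1 1 0] assms(1) by simp
  have ww: "wword k = concat (replicate m [lb, lA]) @ [lb, la] @ concat (replicate m [lB, la])"
    unfolding assms(2) wword_def Let_def by simp
  have e1: "mat2 t 1 0 1 ** mat2 (1/t) 0 0 1 = mat2 1 1 0 1"
    using assms(1) by (simp add: mat2_mult)
  have e2: "mat2 (1/t) (-(1/t)) 0 1 ** mat2 t 0 0 1 = mat2 1 (-(1/t)) 0 1"
    using assms(1) by (simp add: mat2_mult)
  have "weval (mat2 t 0 0 1) (mat2 t 1 0 1) (wword k) =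
     mpow (mat2 1 1 0 1) m ** (mat2 t 1 0 1 ** mat2 t 0 0 1) ** mpow (mat2 1 (-(1/t)) 0 1) m"
    unfolding ww weval_append weval_concat_rep
    by (simp add: eval_letter_def iA iB e1 e2 matrix_mul_assoc)
  also have "\<dots> = mat2 (t^2) (1 + of_nat m - of_nat m * t) 0 1"
    unfolding mpow_aff using assms(1)
    by (simp add: mat2_mult power2_eq_square field_simps)
  finally show ?thesis .
qed


lemma root_exists:
  fixes p :: "complex poly"
  assumes "poly p 0 \<noteq> poly p 1"
  shows "\<exists>t. poly p t = 0"
  using fundamental_theorem_of_algebra assms unfolding constant_def by blast

lemma aff_rep:
  assumes "m \<ge> 1" "n \<noteq> 0" "k = 2*m+1"
  shows "\<exists>t. t \<noteq> 0 \<and> is_rep k n (mat2 t 0 0 1) (mat2 t 1 0 1)"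
proof -
  define c where "c t = 1 + of_nat m - of_nat m * t" for t :: complex
  define g where "g t j = (\<Sum>i<j. (t^2)^i)" for t :: complex and j
  have Q: "weval (mat2 t 0 0 1) (mat2 t 1 0 1) (wpow (wword k) (int j)) = mat2 ((t^2)^j) (c t * g t j) 0 1"
    if "t \<noteq> 0" for t j
    unfolding wpow_def using aff_weval[OF that assms(3)]
    by (simp add: weval_concat_rep mpow_aff c_def g_def)
  have gpoly: "poly (\<Sum>i<j. monom 1 (2*i)) t = g t j" for t j
    by (simp add: g_def poly_sum poly_monom power_mult)
  have m0: "(of_nat m :: complex) \<noteq> 0" using assms(1) by simp
  have g0: "g 0 (Suc j) = 1" for j unfolding g_def by (induction j) simp_all
  show ?thesis
  proof (cases "n > 0")
    case True
    define j where "j = nat n - 1"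
    have j: "n = int (Suc j)" using True j_def by simp
    define p where "p = [:1 + of_nat m, - of_nat m:] * [:1, -1:] * (\<Sum>i<Suc j. monom 1 (2*i)) - (1::complex poly)"
    have pv: "poly p t = (1 - t) * (c t * g t (Suc j)) - 1" for t
      unfolding p_def poly_diff poly_mult gpoly by (simp add: c_def algebra_simps)
    have p0: "poly p 0 = of_nat m" using pv[of 0] by (simp add: c_def g0)
    have p1: "poly p 1 = -1" using pv[of 1] by simp
    have "poly p 0 \<noteq> poly p 1" unfolding p0 p1
      by (metis add_eq_0_iff of_nat_Suc of_nat_neq_0 one_add_one add.commute add_cancel_right_left)
    then obtain t where t: "poly p t = 0" using root_exists by blast
    have t0: "t \<noteq> 0" using t p0 m0 by auto
    have cond: "c t * g t (Suc j) = t * (c t * g t (Suc j)) + 1"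
      using t pv[of t] by (simp add: algebra_simps)
    have "is_rep k n (mat2 t 0 0 1) (mat2 t 1 0 1)"
      unfolding is_rep_def weval_append using Q[OF t0, of "Suc j"] j cond
      by (simp add: eval_letter_def mat2_mult algebra_simps)
    then show ?thesis using t0 by blast
  next
    case False
    define j where "j = nat (-n) - 1"
    have j: "n = - int (Suc j)" using False assms(2) j_def by simp
    define p where "p = [:1 + of_nat m, - of_nat m:] * [:-1, 1:] * (\<Sum>i<Suc j. monom 1 (2*i)) - monom (1::complex) (2 * Suc j)"
    have pv: "poly p t = (t - 1) * (c t * g t (Suc j)) - (t^2)^(Suc j)" for t
      unfolding p_def poly_diff poly_mult gpoly poly_monom by (simp add: c_def power_mult power2_eq_square power_mult_distrib algebra_simps)
    have p0: "poly p 0 = - (1 + of_nat m)" using pv[of 0] by (simp add: c_def g0)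
    have p1: "poly p 1 = -1" using pv[of 1] by simp
    have "poly p 0 \<noteq> poly p 1" unfolding p0 p1 using m0 by simp
    then obtain t where t: "poly p t = 0" using root_exists by blast
    have t0: "t \<noteq> 0" using t p0 m0 
      by (metis add_eq_0_iff neg_equal_0_iff_equal of_nat_Suc of_nat_neq_0 add.commute)
    have cond: "t * (c t * g t (Suc j)) = (t^2)^(Suc j) + c t * g t (Suc j)"
      using t pv[of t] by (simp add: algebra_simps)
    define A where "A = mat2 t 0 0 1"
    define B where "B = mat2 t 1 0 1"
    define v where "v = wpow (wword k) (int (Suc j))"
    have iA: "invertible A" "invertible B" using t0 by (simp_all add: A_def B_def invertible_det_nz det_mat2)
    have AQ: "A ** weval A B v = weval A B v ** B"
      unfolding v_def A_def B_def Q[OF t0] using cond by (simp add: mat2_mult algebra_simps)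
    have PQ: "weval A B v ** weval A B (inv_word v) = mat 1" "weval A B (inv_word v) ** weval A B v = mat 1"
      using weval_inv_word[OF iA] by blast+
    let ?P = "weval A B (inv_word v)" and ?Q = "weval A B v"
    have "?P ** A = ?P ** A ** (?Q ** ?P)" using PQ by simp
    also have "\<dots> = ?P ** (A ** ?Q) ** ?P" by (simp add: matrix_mul_assoc)
    also have "\<dots> = ?P ** (?Q ** B) ** ?P" using AQ by simp
    also have "\<dots> = B ** ?P" using PQ by (simp add: matrix_mul_assoc)
    finally have rel: "?P ** A = B ** ?P" .
    have wn: "wpow (wword k) n = inv_word v" unfolding v_def j using wpow_neg[of "wword k" "int (Suc j)"] by simp
    have "is_rep k n A B"
      unfolding is_rep_def weval_append wn using rel by (simp add: eval_letter_def)
    then show ?thesis using t0 unfolding A_def B_def by blast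
  qed
qed


lemma part2:
  fixes y :: complex
  assumes "M \<noteq> 0" "k = 2*m+1" "m \<ge> 1" "n \<noteq> 0"
    "is_rep k n (mat2 M 1 0 (inverse M)) (mat2 M 0 (2 - y) (inverse M))"
    "proj_faithful k n (mat2 M 1 0 (inverse M)) (mat2 M 0 (2 - y) (inverse M))"
  shows "chebS (int m) y * chebS (int m - 1) y \<noteq> 0"
proof
  assume h: "chebS (int m) y * chebS (int m - 1) y = 0"
  define A where "A = mat2 M 1 0 (inverse M)"
  define B where "B = mat2 M 0 (2 - y) (inverse M)"
  note F = AB_facts[OF assms(1) A_def B_def]
  obtain i where i: "chebS_nat i y = 0"
  proof (cases "chebS (int m) y = 0")
    case True then show ?thesis using that by (simp add: chebS_def)
  next
    case False
    then have h2: "chebS (int m - 1) y = 0" using h by simp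
    obtain m' where m': "m = Suc m'" using assms(3) by (cases m) auto
    show ?thesis using that h2 by (simp add: chebS_def m')
  qed
  define X where "X = A ** matrix_inv B"
  have dX: "det X = 1" unfolding X_def using F det_matrix_inv1 by (simp add: det_mul)
  have tX: "trace X = y" unfolding X_def using F by simp
  define u where "u = concat (replicate (Suc i) [la, lB])"
  have wu: "weval A B u = mpow X (Suc i)"
    unfolding u_def weval_concat_rep X_def by (simp add: eval_letter_def)
  have "mpow X (Suc i) = mat (- chebS (int i - 1) y) \<and> (chebS (int i - 1) y)^2 = 1"
    using ch_zero[OF dX] i tX by simp
  then have "weval A B u = mat 1 \<or> weval A B u = - mat 1" using wu mat_pm[of "chebS (int i - 1) y"] by simp
  then have g: "geq k n u []" using assms(6) unfolding proj_faithful_def A_def B_def by blast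
  obtain t where t: "t \<noteq> 0" "is_rep k n (mat2 t 0 0 1) (mat2 t 1 0 1)"
    using aff_rep[OF assms(3,4,2)] by blast
  have iA: "invertible (mat2 t 0 0 1)" "invertible (mat2 t 1 0 1)"
    using t(1) by (simp_all add: invertible_det_nz det_mat2)
  have "weval (mat2 t 0 0 1) (mat2 t 1 0 1) u = mat 1"
    using geq_weval[OF iA t(2) g] by simp
  moreover have iB: "matrix_inv (mat2 t 1 0 1) = mat2 (1/t) (-(1/t)) 0 1"
    using matrix_inv_mat2[of t 1 1 0] t(1) by simp
  have "mat2 t 0 0 1 ** mat2 (1/t) (-(1/t)) 0 1 = mat2 1 (-1) 0 1"
    using t(1) by (simp add: mat2_mult)
  then have "weval (mat2 t 0 0 1) (mat2 t 1 0 1) u = mpow (mat2 1 (-1) 0 1) (Suc i)"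
    unfolding u_def weval_concat_rep by (simp add: eval_letter_def iB)
  ultimately have "mat2 1 (- of_nat (Suc i)) 0 1 = (mat 1 :: cmat)"
    unfolding mpow_aff by simp
  then show False by (simp add: mat_mat2 mat2_eq_iff del: of_nat_Suc)
qed

theorem proposition3p4:
  fixes k :: nat and n :: int
  assumes "k \<ge> 1" and "n \<noteq> 0"
  shows
   "(\<forall>m M y. k = 2 * m \<longrightarrow> M \<noteq> 0 \<longrightarrow>
       is_rep k n (mat2 M 1 0 (inverse M)) (mat2 M 0 (2 - y) (inverse M)) \<longrightarrow>
       mat2 M 1 0 (inverse M) ** mat2 M 0 (2 - y) (inverse M)
         \<noteq> mat2 M 0 (2 - y) (inverse M) ** mat2 M 1 0 (inverse M) \<longrightarrow>
       chebS (int m - 1) y *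
       chebS (n - 1) (trace (weval (mat2 M 1 0 (inverse M)) (mat2 M 0 (2 - y) (inverse M)) (wword k)))
         \<noteq> 0)
    \<and>
    (\<forall>m M y. k = 2 * m + 1 \<longrightarrow> m \<ge> 1 \<longrightarrow> M \<noteq> 0 \<longrightarrow>
       is_rep k n (mat2 M 1 0 (inverse M)) (mat2 M 0 (2 - y) (inverse M)) \<longrightarrow>
       proj_faithful k n (mat2 M 1 0 (inverse M)) (mat2 M 0 (2 - y) (inverse M)) \<longrightarrow>
       proj_discrete (mat2 M 1 0 (inverse M)) (mat2 M 0 (2 - y) (inverse M)) \<longrightarrow>
       chebS (int m) y * chebS (int m - 1) y \<noteq> 0)"
  using part1[OF _ _ assms(1) assms(2)] part2[OF _ _ _ assms(2)] by blast


end
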